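(* Let $\mathcal{L}$ be the generator of a trace preserving quantum dynamical semigroup on $\mathfrak{T}(\mathcal{H})$ which is matrix normal with respect to an orthonormal basis $\{e_k\}$, and let $\mathcal{D}_e=\mathrm{span}\{e_k\}$. Then: (1) for all $\phi\in\mathcal{D}_e$: $\langle\phi|\mathcal{L}(|\phi\rangle\langle\phi|)|\phi\rangle\le0$; (2) for all $\phi\in\mathcal{D}_e$ and all $\psi\in\mathcal{H}$ with $\langle\phi|\psi\rangle=0$: $\langle\psi|\mathcal{L}(|\phi\rangle\langle\phi|)|\psi\rangle\ge0$; (3) for all finite families $\phi_1,\dots,\phi_N\in\mathcal{D}_e$ and $\psi_1,\dots,\psi_N\in\mathcal{H}$ with $\sum_k\langle\phi_k|\psi_k\rangle=0$: $\sum_{k,\ell}\langle\psi_k|\mathcal{L}(|\phi_k\rangle\langle\phi_\ell|)|\psi_\ell\rangle\ge0$.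
   Context: $\mathcal{H}$ is a separable Hilbert space, $\mathfrak{T}(\mathcal{H})$ the Banach space of trace class operators with trace norm. A trace preserving quantum dynamical semigroup is a strongly continuous semigroup $(\mathcal{T}^t)_{t\ge0}$ of trace preserving completely positive maps on $\mathfrak{T}(\mathcal{H})$; its generator $\mathcal{L}$ is $\mathcal{L}(\rho)=\lim_{t\to0}\frac1t(\mathcal{T}^t(\rho)-\rho)$ in trace norm, on the domain where this limit exists. The semigroup is matrix normal with respect to the orthonormal basis $\{e_k\}$ if $\mathrm{span}\{|e_k\rangle\langle e_\ell|\}$ is a core for $\mathcal{L}$ (in particular it is contained in $\mathcal{D}(\mathcal{L})$). *)

theory Defs
  imports "HOL-Analysis.Analysis" "HOL-Library.Complex_Order"
begin

text \<open>
  A separable Hilbert space H with orthonormal basis (e_k) indexed by a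
  countable set is (unitarily) the space l2(K) of square summable functions K -> complex,
  with e_k the standard basis vector.  We take K to be a countable type 'k.
  Trace class operators on l2(K) are represented by their matrices
  rho i j = <e_i|rho e_j>, i.e. by functions 'k => 'k => complex.
\<close>

type_synonym 'k vec = "'k \<Rightarrow> complex"
type_synonym 'k mat = "'k \<Rightarrow> 'k \<Rightarrow> complex"

definition l2 :: "'k vec \<Rightarrow> bool" where
  "l2 x \<longleftrightarrow> (\<lambda>k. (cmod (x k))\<^sup>2) summable_on UNIV"

definition l2norm :: "'k vec \<Rightarrow> real" where
  "l2norm x = sqrt (\<Sum>\<^sub>\<infinity>k. (cmod (x k))\<^sup>2)"

definition inner_l2 :: "'k vec \<Rightarrow> 'k vec \<Rightarrow> complex" where
  "inner_l2 x y = (\<Sum>\<^sub>\<infinity>k. cnj (x k) * y k)"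

text \<open>Standard orthonormal basis vector e_k and the span D_e of the basis
  (finite complex linear combinations = finitely supported vectors).\<close>
definition basis_vec :: "'k \<Rightarrow> 'k vec" where
  "basis_vec k = (\<lambda>i. if i = k then 1 else 0)"

definition span_basis :: "'k vec set" where
  "span_basis = {x. finite {k. x k \<noteq> 0}}"

definition ket_bra :: "'k vec \<Rightarrow> 'k vec \<Rightarrow> 'k mat" where
  "ket_bra x y = (\<lambda>i j. x i * cnj (y j))"

text \<open>span of the matrix units |e_k><e_l| = finitely supported matrices.\<close>
definition span_matrix_units :: "'k mat set" where
  "span_matrix_units = {\<rho>. finite {(i, j). \<rho> i j \<noteq> 0}}"

text \<open>On a Hilbert space the trace class operators are exactly these, and the trace norm is
  the infimum of sum_n ||u_n|| ||v_n|| over all such representations.\<close>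
definition nuclear_rep :: "'k mat \<Rightarrow> (nat \<Rightarrow> 'k vec) \<Rightarrow> (nat \<Rightarrow> 'k vec) \<Rightarrow> bool" where
  "nuclear_rep \<rho> u v \<longleftrightarrow> (\<forall>n. l2 (u n) \<and> l2 (v n))
     \<and> summable (\<lambda>n. l2norm (u n) * l2norm (v n))
     \<and> (\<forall>i j. \<rho> i j = (\<Sum>n. u n i * cnj (v n j)))"

definition trace_class :: "'k mat set" where
  "trace_class = {\<rho>. \<exists>u v. nuclear_rep \<rho> u v}"

definition tnorm :: "'k mat \<Rightarrow> real" where
  "tnorm \<rho> = Inf {(\<Sum>n. l2norm (u n) * l2norm (v n)) | u v. nuclear_rep \<rho> u v}"

definition trace :: "'k mat \<Rightarrow> complex" where
  "trace \<rho> = (\<Sum>\<^sub>\<infinity>k. \<rho> k k)"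

definition sandwich :: "'k vec \<Rightarrow> 'k mat \<Rightarrow> 'k vec \<Rightarrow> complex" where
  "sandwich x \<rho> y = (\<Sum>\<^sub>\<infinity>(i, j). cnj (x i) * \<rho> i j * y j)"

definition mat_add :: "'k mat \<Rightarrow> 'k mat \<Rightarrow> 'k mat" where
  "mat_add a b = (\<lambda>i j. a i j + b i j)"

definition mat_diff :: "'k mat \<Rightarrow> 'k mat \<Rightarrow> 'k mat" where
  "mat_diff a b = (\<lambda>i j. a i j - b i j)"

definition mat_scale :: "complex \<Rightarrow> 'k mat \<Rightarrow> 'k mat" where
  "mat_scale c a = (\<lambda>i j. c * a i j)"

text \<open>Positivity of an n x n block matrix [rho_ab] of trace class operators,
  as an operator on H^n: sum_{a,b} <x_a|rho_ab|x_b> >= 0 for all x_1..x_n in H.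
  (The order on complex numbers: z >= 0 iff z is real and nonnegative.)\<close>
definition block_positive :: "nat \<Rightarrow> (nat \<Rightarrow> nat \<Rightarrow> 'k mat) \<Rightarrow> bool" where
  "block_positive n \<rho> \<longleftrightarrow> (\<forall>x :: nat \<Rightarrow> 'k vec. (\<forall>a<n. l2 (x a)) \<longrightarrow>
       (\<Sum>a<n. \<Sum>b<n. sandwich (x a) (\<rho> a b) (x b)) \<ge> 0)"

definition bounded_linear_tc :: "('k mat \<Rightarrow> 'k mat) \<Rightarrow> bool" where
  "bounded_linear_tc \<Phi> \<longleftrightarrow>
     (\<forall>\<rho>\<in>trace_class. \<Phi> \<rho> \<in> trace_class)
   \<and> (\<forall>\<rho>\<in>trace_class. \<forall>\<sigma>\<in>trace_class. \<forall>c.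
        \<Phi> (mat_add (mat_scale c \<rho>) \<sigma>) = mat_add (mat_scale c (\<Phi> \<rho>)) (\<Phi> \<sigma>))
   \<and> (\<exists>C. \<forall>\<rho>\<in>trace_class. tnorm (\<Phi> \<rho>) \<le> C * tnorm \<rho>)"

text \<open>Complete positivity: id_n (x) Phi is positive for every n.\<close>
definition completely_positive :: "('k mat \<Rightarrow> 'k mat) \<Rightarrow> bool" where
  "completely_positive \<Phi> \<longleftrightarrow> (\<forall>n. \<forall>\<rho> :: nat \<Rightarrow> nat \<Rightarrow> 'k mat.
      (\<forall>a<n. \<forall>b<n. \<rho> a b \<in> trace_class) \<and> block_positive n \<rho>
        \<longrightarrow> block_positive n (\<lambda>a b. \<Phi> (\<rho> a b)))"

definition trace_preserving :: "('k mat \<Rightarrow> 'k mat) \<Rightarrow> bool" where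
  "trace_preserving \<Phi> \<longleftrightarrow> (\<forall>\<rho>\<in>trace_class. trace (\<Phi> \<rho>) = trace \<rho>)"

definition tp_qds :: "(real \<Rightarrow> 'k mat \<Rightarrow> 'k mat) \<Rightarrow> bool" where
  "tp_qds T \<longleftrightarrow>
     (\<forall>t\<ge>0. bounded_linear_tc (T t) \<and> completely_positive (T t) \<and> trace_preserving (T t))
   \<and> (\<forall>\<rho>\<in>trace_class. T 0 \<rho> = \<rho>)
   \<and> (\<forall>s\<ge>0. \<forall>t\<ge>0. \<forall>\<rho>\<in>trace_class. T (s + t) \<rho> = T s (T t \<rho>))
   \<and> (\<forall>\<rho>\<in>trace_class. ((\<lambda>t. tnorm (mat_diff (T t \<rho>) \<rho>)) \<longlongrightarrow> 0) (at_right 0))"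

definition is_generator :: "(real \<Rightarrow> 'k mat \<Rightarrow> 'k mat) \<Rightarrow> 'k mat set \<Rightarrow> ('k mat \<Rightarrow> 'k mat) \<Rightarrow> bool" where
  "is_generator T D L \<longleftrightarrow>
     D = {\<rho>\<in>trace_class. \<exists>\<sigma>\<in>trace_class.
            ((\<lambda>t. tnorm (mat_diff (mat_scale (complex_of_real (1 / t)) (mat_diff (T t \<rho>) \<rho>)) \<sigma>))
               \<longlongrightarrow> 0) (at_right 0)}
   \<and> (\<forall>\<rho>\<in>D. L \<rho> \<in> trace_class \<and>
            ((\<lambda>t. tnorm (mat_diff (mat_scale (complex_of_real (1 / t)) (mat_diff (T t \<rho>) \<rho>)) (L \<rho>)))
               \<longlongrightarrow> 0) (at_right 0))"

definition is_core :: "'k mat set \<Rightarrow> 'k mat set \<Rightarrow> ('k mat \<Rightarrow> 'k mat) \<Rightarrow> bool" where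
  "is_core S D L \<longleftrightarrow> S \<subseteq> D \<and>
     (\<forall>\<rho> \<sigma>. (\<exists>r :: nat \<Rightarrow> 'k mat. (\<forall>n. r n \<in> S)
                 \<and> (\<lambda>n. tnorm (mat_diff (r n) \<rho>)) \<longlonglongrightarrow> 0
                 \<and> (\<lambda>n. tnorm (mat_diff (L (r n)) \<sigma>)) \<longlonglongrightarrow> 0)
              \<longleftrightarrow> (\<rho> \<in> D \<and> \<sigma> = L \<rho>))"

definition matrix_normal :: "(real \<Rightarrow> 'k mat \<Rightarrow> 'k mat) \<Rightarrow> 'k mat set \<Rightarrow> ('k mat \<Rightarrow> 'k mat) \<Rightarrow> bool" where
  "matrix_normal T D L \<longleftrightarrow> is_generator T D L \<and> is_core span_matrix_units D L"

end

theory Submission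
  imports Defs
begin


lemma l2_sq_summable: "l2 x \<Longrightarrow> (\<lambda>k. (cmod (x k))\<^sup>2) summable_on UNIV"
  by (simp add: l2_def)

lemma l2norm_sq: "l2norm x ^ 2 = (\<Sum>\<^sub>\<infinity>k. (cmod (x k))\<^sup>2)"
  unfolding l2norm_def proof -
  have "0 \<le> (\<Sum>\<^sub>\<infinity>k. (cmod (x k))\<^sup>2)" by (rule infsum_nonneg) simp
  then show "sqrt (\<Sum>\<^sub>\<infinity>k. (cmod (x k))\<^sup>2) ^ 2 = (\<Sum>\<^sub>\<infinity>k. (cmod (x k))\<^sup>2)" by simp
qed

lemma l2norm_nonneg: "l2norm x \<ge> 0"
proof -
  have "0 \<le> (\<Sum>\<^sub>\<infinity>k. (cmod (x k))\<^sup>2)" by (rule infsum_nonneg) simp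
  then show ?thesis unfolding l2norm_def by simp
qed

lemma cs_summable:
  assumes "l2 x" "l2 y"
  shows "(\<lambda>k. cmod (x k) * cmod (y k)) summable_on UNIV"
proof -
  have "(\<lambda>k. norm (cmod (x k) * cmod (y k))) summable_on UNIV"
    apply (rule Infinite_Sum.abs_summable_product)
    using assms unfolding l2_def
    by (simp_all add: power2_eq_square)
  then show ?thesis by (rule abs_summable_summable)
qed

lemma cs_bound:
  assumes "l2 x" "l2 y"
  shows "(\<Sum>\<^sub>\<infinity>k. cmod (x k) * cmod (y k)) \<le> l2norm x * l2norm y"
proof (rule infsum_le_finite_sums[OF cs_summable[OF assms]])
  fix F :: "'a set" assume F: "finite F"
  have "(\<Sum>k\<in>F. cmod (x k) * cmod (y k)) = (\<Sum>k\<in>F. \<bar>cmod (x k)\<bar> * \<bar>cmod (y k)\<bar>)" by simp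
  also have "\<dots> \<le> L2_set (\<lambda>k. cmod (x k)) F * L2_set (\<lambda>k. cmod (y k)) F"
    by (rule L2_set_mult_ineq)
  also have "\<dots> \<le> l2norm x * l2norm y"
  proof (rule mult_mono)
    have "\<And>z. l2 z \<Longrightarrow> L2_set (\<lambda>k. cmod (z k)) F \<le> l2norm z"
      unfolding L2_set_def l2norm_def
      apply (rule real_sqrt_le_mono)
      apply (rule finite_sum_le_infsum)
      using F by (auto simp: l2_def)
    then show "L2_set (\<lambda>k. cmod (x k)) F \<le> l2norm x" "L2_set (\<lambda>k. cmod (y k)) F \<le> l2norm y"
      using assms by auto
  qed (auto simp: l2norm_nonneg)
  finally show "(\<Sum>k\<in>F. cmod (x k) * cmod (y k)) \<le> l2norm x * l2norm y" .
qed

lemma prod_summable: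
  fixes f1 :: "'a \<Rightarrow> 'c::{banach,real_normed_field}" and f2 :: "'b \<Rightarrow> 'c"
  assumes s1: "(\<lambda>i. norm (f1 i)) summable_on UNIV" and s2: "(\<lambda>j. norm (f2 j)) summable_on UNIV"
  shows "(\<lambda>p. norm (f1 (fst p) * f2 (snd p))) summable_on UNIV"
    and "(\<Sum>\<^sub>\<infinity>p. f1 (fst p) * f2 (snd p)) = (\<Sum>\<^sub>\<infinity>i. f1 i) * (\<Sum>\<^sub>\<infinity>j. f2 j)"
proof -
  have "(\<lambda>p. norm (f1 (fst p) * f2 (snd p))) summable_on Sigma UNIV (\<lambda>_. UNIV)"
  proof (rule Infinite_Sum.abs_summable_on_Sigma_iff[THEN iffD2], intro conjI ballI)
    fix i show "(\<lambda>j. norm (f1 (fst (i, j)) * f2 (snd (i, j)))) summable_on UNIV"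
      using summable_on_cmult_right[OF s2, of "norm (f1 i)"] by (simp add: norm_mult)
  next
    have "(\<lambda>i. norm (f1 i) * (\<Sum>\<^sub>\<infinity>j. norm (f2 j))) summable_on UNIV"
      by (rule summable_on_cmult_left[OF s1])
    then show "(\<lambda>x. norm (\<Sum>\<^sub>\<infinity>y. norm (f1 (fst (x, y)) * f2 (snd (x, y))))) summable_on UNIV"
      by (simp add: norm_mult infsum_cmult_right' abs_mult infsum_nonneg)
  qed
  then show ns: "(\<lambda>p. norm (f1 (fst p) * f2 (snd p))) summable_on UNIV" by simp
  have sm: "(\<lambda>p. f1 (fst p) * f2 (snd p)) summable_on Sigma UNIV (\<lambda>_. UNIV)"
    by (rule abs_summable_summable) (use ns in simp)
  have "(\<Sum>\<^sub>\<infinity>p. f1 (fst p) * f2 (snd p)) = (\<Sum>\<^sub>\<infinity>i. \<Sum>\<^sub>\<infinity>j. f1 (fst (i,j)) * f2 (snd (i,j)))"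
    using infsum_Sigma_banach[OF sm] by simp
  also have "\<dots> = (\<Sum>\<^sub>\<infinity>i. f1 i * (\<Sum>\<^sub>\<infinity>j. f2 j))"
    by (simp add: infsum_cmult_right')
  also have "\<dots> = (\<Sum>\<^sub>\<infinity>i. f1 i) * (\<Sum>\<^sub>\<infinity>j. f2 j)"
    by (simp add: infsum_cmult_left')
  finally show "(\<Sum>\<^sub>\<infinity>p. f1 (fst p) * f2 (snd p)) = (\<Sum>\<^sub>\<infinity>i. f1 i) * (\<Sum>\<^sub>\<infinity>j. f2 j)" .
qed

lemma l2_le_norm:
  assumes "l2 z" shows "cmod (z i) \<le> l2norm z"
proof -
  have "(\<Sum>k\<in>{i}. (cmod (z k))\<^sup>2) \<le> (\<Sum>\<^sub>\<infinity>k. (cmod (z k))\<^sup>2)"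
    by (rule finite_sum_le_infsum) (use assms in \<open>auto simp: l2_def\<close>)
  then have "sqrt ((cmod (z i))\<^sup>2) \<le> l2norm z" unfolding l2norm_def
    by (simp del: real_sqrt_abs)
  then show ?thesis by simp
qed

lemma inner_summable:
  assumes "l2 x" "l2 u"
  shows "(\<lambda>i. norm (cnj (x i) * u i)) summable_on UNIV"
    and "(\<Sum>\<^sub>\<infinity>i. norm (cnj (x i) * u i)) \<le> l2norm x * l2norm u"
  using cs_summable[OF assms] cs_bound[OF assms] by (simp_all add: norm_mult)

lemma nuclear_sandwich:
  assumes nr: "nuclear_rep \<rho> u v" and x: "l2 x" and y: "l2 y"
  shows "(\<lambda>(i,j). cnj (x i) * \<rho> i j * y j) summable_on UNIV"
    and "cmod (sandwich x \<rho> y) \<le> l2norm x * l2norm y * (\<Sum>n. l2norm (u n) * l2norm (v n))"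
proof -
  define a where "a n i = cnj (x i) * u n i" for n i
  define b where "b n j = cnj (v n j) * y j" for n j
  define g where "g n p = a n (fst p) * b n (snd p)" for n p
  define c where "c n = l2norm x * l2norm y * (l2norm (u n) * l2norm (v n))" for n
  have lu: "\<And>n. l2 (u n)" and lv: "\<And>n. l2 (v n)"
    and sumS: "summable (\<lambda>n. l2norm (u n) * l2norm (v n))"
    and rho: "\<And>i j. \<rho> i j = (\<Sum>n. u n i * cnj (v n j))"
    using nr unfolding nuclear_rep_def by auto
  have an: "(\<lambda>i. norm (a n i)) summable_on UNIV" "(\<Sum>\<^sub>\<infinity>i. norm (a n i)) \<le> l2norm x * l2norm (u n)" for n
    unfolding a_def using inner_summable[OF x lu] by auto
  have bn: "(\<lambda>j. norm (b n j)) summable_on UNIV" "(\<Sum>\<^sub>\<infinity>j. norm (b n j)) \<le> l2norm (v n) * l2norm y" for n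
    unfolding b_def using inner_summable[OF lv y] by auto
  have gn: "(\<lambda>p. norm (g n p)) summable_on UNIV" "(\<Sum>\<^sub>\<infinity>p. g n p) = (\<Sum>\<^sub>\<infinity>i. a n i) * (\<Sum>\<^sub>\<infinity>j. b n j)" for n
    unfolding g_def using prod_summable[OF an(1) bn(1)] by auto
  have gnn: "(\<Sum>\<^sub>\<infinity>p. norm (g n p)) = (\<Sum>\<^sub>\<infinity>i. norm (a n i)) * (\<Sum>\<^sub>\<infinity>j. norm (b n j))" for n
    using prod_summable(2)[of "\<lambda>i. norm (a n i)" "\<lambda>j. norm (b n j)"] an(1) bn(1)
    unfolding g_def by (simp add: norm_mult)
  have gnb: "(\<Sum>\<^sub>\<infinity>p. norm (g n p)) \<le> c n" for n
  proof -
    have "(\<Sum>\<^sub>\<infinity>i. norm (a n i)) * (\<Sum>\<^sub>\<infinity>j. norm (b n j)) \<le> (l2norm x * l2norm (u n)) * (l2norm (v n) * l2norm y)"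
      by (rule mult_mono[OF an(2) bn(2)]) (auto intro!: infsum_nonneg mult_nonneg_nonneg l2norm_nonneg)
    then show ?thesis unfolding gnn c_def by (simp add: algebra_simps)
  qed
  have c_nonneg: "c n \<ge> 0" for n unfolding c_def by (simp add: l2norm_nonneg)
  have c_sums: "c sums (l2norm x * l2norm y * (\<Sum>n. l2norm (u n) * l2norm (v n)))"
    unfolding c_def by (intro sums_mult summable_sums sumS)
  have c_has: "(c has_sum (l2norm x * l2norm y * (\<Sum>n. l2norm (u n) * l2norm (v n)))) UNIV"
    by (rule sums_nonneg_imp_has_sum[OF c_sums c_nonneg])
  have gsum: "(\<lambda>q. norm (g (fst q) (snd q))) summable_on Sigma UNIV (\<lambda>_. UNIV)"
  proof (rule Infinite_Sum.abs_summable_on_Sigma_iff[THEN iffD2], intro conjI ballI)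
    fix n show "(\<lambda>p. norm (g (fst (n, p)) (snd (n, p)))) summable_on UNIV" using gn(1) by simp
  next
    show "(\<lambda>n. norm (\<Sum>\<^sub>\<infinity>p. norm (g (fst (n, p)) (snd (n, p))))) summable_on UNIV"
      apply (rule summable_on_comparison_test[OF has_sum_imp_summable[OF c_has]])
      subgoal for n
      proof -
        have "0 \<le> (\<Sum>\<^sub>\<infinity>p. norm (g n p))" by (rule infsum_nonneg) simp
        then show ?thesis using gnb[of n] by (simp only: fst_conv snd_conv real_norm_def abs_abs abs_of_nonneg)
      qed
      by (rule norm_ge_zero)
  qed
  have gsum2: "(\<lambda>q. norm (g (snd q) (fst q))) summable_on Sigma UNIV (\<lambda>_. UNIV)"
    using gsum summable_on_swap[of "\<lambda>q. norm (g (fst q) (snd q))" UNIV UNIV]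
    by (simp add: case_prod_unfold)
  from Infinite_Sum.abs_summable_on_Sigma_iff[THEN iffD1, OF gsum2]
  have slice2: "\<And>p. (\<lambda>n. norm (g n p)) summable_on UNIV"
    and outer2: "(\<lambda>p. norm (\<Sum>\<^sub>\<infinity>n. norm (g n p))) summable_on UNIV" by auto
  have hs: "((\<lambda>n. g n (i,j)) has_sum (cnj (x i) * \<rho> i j * y j)) UNIV" for i j
  proof -
    have "summable (\<lambda>n. norm (u n i * cnj (v n j)))"
      apply (rule summable_comparison_test[OF _ sumS])
      by (auto simp: norm_mult intro!: exI[of _ 0] mult_mono l2_le_norm lu lv l2norm_nonneg)
    then have "((\<lambda>n. u n i * cnj (v n j)) has_sum \<rho> i j) UNIV"
      unfolding rho by (rule norm_summable_imp_has_sum[OF _ summable_sums[OF summable_norm_cancel]]) (use \<open>summable (\<lambda>n. norm (u n i * cnj (v n j)))\<close> in auto)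
    then have "((\<lambda>n. cnj (x i) * (u n i * cnj (v n j)) * y j) has_sum (cnj (x i) * \<rho> i j * y j)) UNIV"
      by (intro has_sum_cmult_left has_sum_cmult_right)
    then show ?thesis unfolding g_def a_def b_def by (simp add: algebra_simps)
  qed
  have eqp: "(\<lambda>(i,j). cnj (x i) * \<rho> i j * y j) = (\<lambda>p. \<Sum>\<^sub>\<infinity>n. g n p)"
  proof (rule ext)
    fix p :: "'a \<times> 'a"
    obtain i j where "p = (i,j)" by force
    then show "(\<lambda>(i,j). cnj (x i) * \<rho> i j * y j) p = (\<Sum>\<^sub>\<infinity>n. g n p)"
      using infsumI[OF hs, of i j] by simp
  qed
  show summ: "(\<lambda>(i,j). cnj (x i) * \<rho> i j * y j) summable_on UNIV"
    unfolding eqp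
    apply (rule abs_summable_summable, rule Infinite_Sum.abs_summable_on_comparison_test[OF outer2])
    subgoal for p
    proof -
      have "0 \<le> (\<Sum>\<^sub>\<infinity>n. norm (g n p))" by (rule infsum_nonneg) simp
      then show ?thesis using norm_infsum_bound[OF slice2[of p]] by simp
    qed
    done
  have "sandwich x \<rho> y = (\<Sum>\<^sub>\<infinity>p. \<Sum>\<^sub>\<infinity>n. g n p)"
    unfolding sandwich_def eqp ..
  also have "\<dots> = (\<Sum>\<^sub>\<infinity>n. \<Sum>\<^sub>\<infinity>p. g n p)"
  proof (rule infsum_swap_banach[symmetric])
    show "(\<lambda>(n, p). g n p) summable_on UNIV \<times> UNIV"
      using abs_summable_summable[OF gsum] by (simp add: case_prod_unfold)
  qed
  finally have sw: "sandwich x \<rho> y = (\<Sum>\<^sub>\<infinity>n. \<Sum>\<^sub>\<infinity>p. g n p)" .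
  have nb: "norm (\<Sum>\<^sub>\<infinity>p. g n p) \<le> c n" for n
    by (rule order_trans[OF norm_infsum_bound[OF gn(1)] gnb])
  have "norm (\<Sum>\<^sub>\<infinity>n. \<Sum>\<^sub>\<infinity>p. g n p) \<le> l2norm x * l2norm y * (\<Sum>n. l2norm (u n) * l2norm (v n))"
  proof (rule norm_infsum_le[OF _ c_has])
    show "((\<lambda>n. \<Sum>\<^sub>\<infinity>p. g n p) has_sum (\<Sum>\<^sub>\<infinity>n. \<Sum>\<^sub>\<infinity>p. g n p)) UNIV"
    proof (rule has_sum_infsum, rule abs_summable_summable)
      show "(\<lambda>n. norm (\<Sum>\<^sub>\<infinity>p. g n p)) summable_on UNIV"
        by (rule summable_on_comparison_test[OF has_sum_imp_summable[OF c_has]]) (use nb in auto)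
    qed
  qed (use nb in auto)
  then show "cmod (sandwich x \<rho> y) \<le> l2norm x * l2norm y * (\<Sum>n. l2norm (u n) * l2norm (v n))"
    using sw by simp
qed



lemma tc_sandwich:
  assumes "\<rho> \<in> trace_class" "l2 x" "l2 y"
  shows "(\<lambda>(i,j). cnj (x i) * \<rho> i j * y j) summable_on UNIV"
    and "cmod (sandwich x \<rho> y) \<le> l2norm x * l2norm y * tnorm \<rho>"
proof -
  obtain u v where nr: "nuclear_rep \<rho> u v" using assms(1) unfolding trace_class_def by auto
  show "(\<lambda>(i,j). cnj (x i) * \<rho> i j * y j) summable_on UNIV"
    by (rule nuclear_sandwich(1)[OF nr assms(2,3)])
  define K where "K = l2norm x * l2norm y"
  have K0: "K \<ge> 0" unfolding K_def by (simp add: l2norm_nonneg)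
  let ?S = "{(\<Sum>n. l2norm (u n) * l2norm (v n)) | u v. nuclear_rep \<rho> u v}"
  have ne: "?S \<noteq> {}" using nr by blast
  have b: "cmod (sandwich x \<rho> y) \<le> K * s" if "s \<in> ?S" for s
    using that nuclear_sandwich(2)[OF _ assms(2,3)] unfolding K_def by auto
  show "cmod (sandwich x \<rho> y) \<le> l2norm x * l2norm y * tnorm \<rho>"
  proof (cases "K = 0")
    case True
    have "cmod (sandwich x \<rho> y) \<le> K * (\<Sum>n. l2norm (u n) * l2norm (v n))"
      by (rule b) (use nr in blast)
    moreover have "l2norm x * l2norm y * tnorm \<rho> = 0" using True unfolding K_def by simp
    moreover have "K * (\<Sum>n. l2norm (u n) * l2norm (v n)) = 0" using True by simp
    ultimately show ?thesis by linarith
  next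
    case False
    then have Kp: "K > 0" using K0 by simp
    have "cmod (sandwich x \<rho> y) / K \<le> Inf ?S"
      by (rule cInf_greatest[OF ne]) (use b Kp in \<open>auto simp: field_simps mult.commute\<close>)
    then show ?thesis using Kp unfolding tnorm_def K_def[symmetric] by (simp add: field_simps mult.commute)
  qed
qed

lemma l2_scale: "l2 u \<Longrightarrow> l2 (\<lambda>i. c * u i)"
  unfolding l2_def by (simp add: norm_mult power_mult_distrib summable_on_cmult_right)

lemma l2norm_scale: "l2norm (\<lambda>i. c * u i) = cmod c * l2norm u"
  unfolding l2norm_def by (simp add: norm_mult power_mult_distrib infsum_cmult_right' real_sqrt_mult)

lemma nuclear_entry_summable:
  assumes "nuclear_rep \<rho> u v" shows "summable (\<lambda>n. u n i * cnj (v n j))"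
proof -
  have "summable (\<lambda>n. norm (u n i * cnj (v n j)))"
    apply (rule summable_comparison_test[of _ "\<lambda>n. l2norm (u n) * l2norm (v n)"])
    using assms unfolding nuclear_rep_def
    by (auto simp: norm_mult intro!: exI[of _ 0] mult_mono l2_le_norm l2norm_nonneg)
  then show ?thesis by (rule summable_norm_cancel)
qed

lemma tc_scale:
  assumes "\<rho> \<in> trace_class" shows "mat_scale c \<rho> \<in> trace_class"
proof -
  obtain u v where nr: "nuclear_rep \<rho> u v" using assms unfolding trace_class_def by auto
  have "nuclear_rep (mat_scale c \<rho>) (\<lambda>n i. c * u n i) v"
    using nr nuclear_entry_summable[OF nr] unfolding nuclear_rep_def mat_scale_def
    by (auto simp: l2_scale l2norm_scale mult.assoc suminf_mult intro!: summable_mult)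
  then show ?thesis unfolding trace_class_def by auto
qed

lemma interleave_sums:
  fixes f g :: "nat \<Rightarrow> complex"
  assumes "f sums x" "g sums y"
  shows "(\<lambda>n. if even n then f (n div 2) else g (n div 2)) sums (x + y)"
proof -
  have e: "\<And>n. odd n \<Longrightarrow> ((n::nat) - 1) div 2 = n div 2" by presburger
  have "(\<lambda>n. if even n then Re (f (n div 2)) else Re (g ((n - 1) div 2))) sums (Re x + Re y)"
    using sums_if[of "\<lambda>n. Re (g n)" "Re y" "\<lambda>n. Re (f n)" "Re x"] assms
    by (simp add: sums_complex_iff add.commute)
  moreover have "(\<lambda>n. if even n then Im (f (n div 2)) else Im (g ((n - 1) div 2))) sums (Im x + Im y)"
    using sums_if[of "\<lambda>n. Im (g n)" "Im y" "\<lambda>n. Im (f n)" "Im x"] assms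
    by (simp add: sums_complex_iff add.commute)
  ultimately show ?thesis unfolding sums_complex_iff using e
    by (simp add: if_distrib cong: if_cong)
qed

lemma interleave_sums_real:
  fixes f g :: "nat \<Rightarrow> real"
  assumes "f sums x" "g sums y"
  shows "(\<lambda>n. if even n then f (n div 2) else g (n div 2)) sums (x + y)"
proof -
  have e: "\<And>n. odd n \<Longrightarrow> ((n::nat) - 1) div 2 = n div 2" by presburger
  show ?thesis using sums_if[OF assms(2,1)] e by (simp add: add.commute cong: if_cong)
qed

lemma tc_add:
  assumes "\<rho> \<in> trace_class" "\<sigma> \<in> trace_class" shows "mat_add \<rho> \<sigma> \<in> trace_class"
proof -
  obtain u v where nr: "nuclear_rep \<rho> u v" using assms unfolding trace_class_def by auto
  obtain u2 v2 where nr2: "nuclear_rep \<sigma> u2 v2" using assms unfolding trace_class_def by auto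
  define u' where "u' n = (\<lambda>i. if even n then u (n div 2) i else u2 (n div 2) i)" for n
  define v' where "v' n = (\<lambda>i. if even n then v (n div 2) i else v2 (n div 2) i)" for n
  have u'e: "u' n = (if even n then u (n div 2) else u2 (n div 2))" for n unfolding u'_def by auto
  have v'e: "v' n = (if even n then v (n div 2) else v2 (n div 2))" for n unfolding v'_def by auto
  have "nuclear_rep (mat_add \<rho> \<sigma>) u' v'"
    unfolding nuclear_rep_def
  proof (intro conjI)
    show "\<forall>n. l2 (u' n) \<and> l2 (v' n)" using nr nr2 unfolding nuclear_rep_def u'e v'e by auto
  next
    have "(\<lambda>n. if even n then l2norm (u (n div 2)) * l2norm (v (n div 2))
        else l2norm (u2 (n div 2)) * l2norm (v2 (n div 2))) sums
       ((\<Sum>n. l2norm (u n) * l2norm (v n)) + (\<Sum>n. l2norm (u2 n) * l2norm (v2 n)))"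
      using nr nr2 unfolding nuclear_rep_def by (intro interleave_sums_real summable_sums) auto
    then show "summable (\<lambda>n. l2norm (u' n) * l2norm (v' n))"
      unfolding u'e v'e by (simp add: sums_summable if_distrib cong: if_cong)
  next
    show "\<forall>i j. mat_add \<rho> \<sigma> i j = (\<Sum>n. u' n i * cnj (v' n j))"
    proof (intro allI)
    fix i j
    have "(\<lambda>n. if even n then u (n div 2) i * cnj (v (n div 2) j)
        else u2 (n div 2) i * cnj (v2 (n div 2) j)) sums (\<rho> i j + \<sigma> i j)"
    proof (rule interleave_sums)
      show "(\<lambda>n. u n i * cnj (v n j)) sums \<rho> i j"
        using nuclear_entry_summable[OF nr] nr unfolding nuclear_rep_def by (simp add: summable_sums)
      show "(\<lambda>n. u2 n i * cnj (v2 n j)) sums \<sigma> i j"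
        using nuclear_entry_summable[OF nr2] nr2 unfolding nuclear_rep_def by (simp add: summable_sums)
    qed
    then show "mat_add \<rho> \<sigma> i j = (\<Sum>n. u' n i * cnj (v' n j))"
      unfolding mat_add_def u'_def v'_def by (simp add: sums_iff if_distrib cong: if_cong)
    qed
  qed
  then show ?thesis unfolding trace_class_def by auto
qed

lemma mat_diff_eq: "mat_diff a b = mat_add a (mat_scale (-1) b)"
  unfolding mat_diff_def mat_add_def mat_scale_def by auto

lemma tc_diff: "\<rho> \<in> trace_class \<Longrightarrow> \<sigma> \<in> trace_class \<Longrightarrow> mat_diff \<rho> \<sigma> \<in> trace_class"
  unfolding mat_diff_eq by (intro tc_add tc_scale)



definition supp :: "'k vec \<Rightarrow> 'k set" where "supp u = {k. u k \<noteq> 0}"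

lemma span_basis_finite: "u \<in> span_basis \<Longrightarrow> finite (supp u)"
  unfolding span_basis_def supp_def by simp

lemma span_basis_l2: "u \<in> span_basis \<Longrightarrow> l2 u"
  unfolding l2_def span_basis_def
  by (rule finite_nonzero_values_imp_summable_on) (auto elim!: finite_subset[rotated])

lemma infsum_supp:
  assumes "finite A" "\<And>x. x \<notin> A \<Longrightarrow> f x = 0"
  shows "infsum f UNIV = sum f A"
proof -
  have "infsum f UNIV = infsum f A" by (rule infsum_cong_neutral) (use assms in auto)
  then show ?thesis using assms by simp
qed

lemma sandwich_fin:
  assumes "finite A" "supp x \<subseteq> A" "supp y \<subseteq> A"
  shows "sandwich x \<sigma> y = (\<Sum>i\<in>A. \<Sum>j\<in>A. cnj (x i) * \<sigma> i j * y j)"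
proof -
  have "sandwich x \<sigma> y = (\<Sum>p\<in>A\<times>A. (\<lambda>(i,j). cnj (x i) * \<sigma> i j * y j) p)"
    unfolding sandwich_def
    by (rule infsum_supp) (use assms in \<open>auto simp: supp_def\<close>)
  also have "\<dots> = (\<Sum>i\<in>A. \<Sum>j\<in>A. cnj (x i) * \<sigma> i j * y j)"
    by (simp add: sum.cartesian_product)
  finally show ?thesis .
qed

lemma inner_fin:
  assumes "finite A" "supp u \<subseteq> A"
  shows "inner_l2 u y = (\<Sum>i\<in>A. cnj (u i) * y i)"
  unfolding inner_l2_def by (rule infsum_supp) (use assms in \<open>auto simp: supp_def\<close>)

lemma sandwich_ketbra:
  assumes "u \<in> span_basis" "v \<in> span_basis"
  shows "sandwich x (ket_bra u v) y = cnj (inner_l2 u x) * inner_l2 v y"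
proof -
  let ?f = "\<lambda>(i,j). cnj (x i) * ket_bra u v i j * y j"
  have fu: "finite (supp u)" "finite (supp v)" using assms span_basis_finite by auto
  have "sandwich x (ket_bra u v) y = (\<Sum>p\<in>supp u \<times> supp v. ?f p)"
    unfolding sandwich_def
    by (rule infsum_supp) (use fu in \<open>auto simp: supp_def ket_bra_def\<close>)
  also have "\<dots> = (\<Sum>i\<in>supp u. cnj (x i) * u i) * (\<Sum>j\<in>supp v. cnj (v j) * y j)"
    by (simp add: sum.cartesian_product[symmetric] sum_product ket_bra_def algebra_simps)
  also have "\<dots> = cnj (inner_l2 u x) * inner_l2 v y"
    using inner_fin[OF fu(1) order_refl, of x] inner_fin[OF fu(2) order_refl, of y]
    by (simp add: mult.commute)
  finally show ?thesis .
qed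

lemma ketbra_tc:
  assumes "u \<in> span_basis" "v \<in> span_basis"
  shows "ket_bra u v \<in> trace_class"
proof -
  define u' where "u' n = (if n = 0 then u else (\<lambda>_. 0))" for n :: nat
  define v' where "v' n = (if n = 0 then v else (\<lambda>_. 0))" for n :: nat
  have z: "l2 (\<lambda>_. 0)" unfolding l2_def by simp
  have "nuclear_rep (ket_bra u v) u' v'"
    unfolding nuclear_rep_def
  proof (intro conjI)
    show "\<forall>n. l2 (u' n) \<and> l2 (v' n)" using assms z span_basis_l2 unfolding u'_def v'_def by auto
    show "summable (\<lambda>n. l2norm (u' n) * l2norm (v' n))"
      by (rule summable_finite[of "{0}"]) (auto simp: u'_def v'_def l2norm_def)
    show "\<forall>i j. ket_bra u v i j = (\<Sum>n. u' n i * cnj (v' n j))"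
    proof (intro allI)
    fix i j
    have "(\<lambda>n. u' n i * cnj (v' n j)) = (\<lambda>n. if n = 0 then u i * cnj (v j) else 0)"
      unfolding u'_def v'_def by auto
    then show "ket_bra u v i j = (\<Sum>n. u' n i * cnj (v' n j))"
      using sums_single[of 0 "\<lambda>_. u i * cnj (v j)"] unfolding ket_bra_def by (simp add: sums_iff)
    qed
  qed
  then show ?thesis unfolding trace_class_def by auto
qed

lemma ketbra_units:
  assumes "u \<in> span_basis" "v \<in> span_basis"
  shows "ket_bra u v \<in> span_matrix_units"
proof -
  have "{(i, j). ket_bra u v i j \<noteq> 0} \<subseteq> supp u \<times> supp v"
    by (auto simp: ket_bra_def supp_def)
  from finite_subset[OF this finite_cartesian_product[OF span_basis_finite[OF assms(1)] span_basis_finite[OF assms(2)]]]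
  show ?thesis unfolding span_matrix_units_def by simp
qed

lemma cnj_mult_self_nonneg: "0 \<le> cnj z * (z::complex)"
proof -
  have "cnj z * z = complex_of_real ((cmod z)\<^sup>2)"
    by (simp add: complex_norm_square mult.commute del: of_real_power)
  then show ?thesis by (simp add: less_eq_complex_def)
qed

lemma ketbra_block_positive:
  fixes \<phi> :: "nat \<Rightarrow> 'k vec"
  assumes "\<forall>a<n. \<phi> a \<in> span_basis"
  shows "block_positive n (\<lambda>a b. ket_bra (\<phi> a) (\<phi> b))"
  unfolding block_positive_def
proof (intro allI impI)
  fix x :: "nat \<Rightarrow> 'k vec" assume "\<forall>a<n. l2 (x a)"
  have "(\<Sum>a<n. \<Sum>b<n. sandwich (x a) (ket_bra (\<phi> a) (\<phi> b)) (x b))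
      = (\<Sum>a<n. \<Sum>b<n. cnj (inner_l2 (\<phi> a) (x a)) * inner_l2 (\<phi> b) (x b))"
    using assms by (auto intro!: sum.cong simp: sandwich_ketbra)
  also have "\<dots> = cnj (\<Sum>a<n. inner_l2 (\<phi> a) (x a)) * (\<Sum>b<n. inner_l2 (\<phi> b) (x b))"
    by (simp add: sum_product)
  also have "\<dots> \<ge> 0" by (rule cnj_mult_self_nonneg)
  finally show "(\<Sum>a<n. \<Sum>b<n. sandwich (x a) (ket_bra (\<phi> a) (\<phi> b)) (x b)) \<ge> 0" .
qed

lemma sandwich_add:
  assumes "(\<lambda>(i,j). cnj (x i) * A i j * y j) summable_on UNIV"
    "(\<lambda>(i,j). cnj (x i) * B i j * y j) summable_on UNIV"
  shows "sandwich x (mat_add A B) y = sandwich x A y + sandwich x B y"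
  unfolding sandwich_def mat_add_def
  using infsum_add[OF assms] by (simp add: case_prod_unfold algebra_simps)

lemma sandwich_scale: "sandwich x (mat_scale c A) y = c * sandwich x A y"
  unfolding sandwich_def mat_scale_def
  using infsum_cmult_right'[of c "\<lambda>(i,j). cnj (x i) * A i j * y j" UNIV]
  by (simp add: case_prod_unfold algebra_simps)

lemma sandwich_diff_tc:
  assumes "A \<in> trace_class" "B \<in> trace_class" "l2 x" "l2 y"
  shows "sandwich x (mat_diff A B) y = sandwich x A y - sandwich x B y"
proof -
  have "sandwich x (mat_diff A B) y = sandwich x A y + sandwich x (mat_scale (-1) B) y"
    unfolding mat_diff_eq
    by (rule sandwich_add[OF tc_sandwich(1)[OF assms(1,3,4)] tc_sandwich(1)[OF tc_scale[OF assms(2)] assms(3,4)]])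
  then show ?thesis by (simp add: sandwich_scale)
qed



lemma lim_nonneg_complex:
  fixes f :: "real \<Rightarrow> complex"
  assumes "(f \<longlongrightarrow> l) (at_right 0)" "eventually (\<lambda>t. f t \<ge> 0) (at_right 0)"
  shows "l \<ge> 0"
proof -
  have ev: "eventually (\<lambda>t. 0 \<le> Re (f t) \<and> Im (f t) = 0) (at_right 0)"
    using assms(2) by eventually_elim (simp add: less_eq_complex_def)
  have R: "((\<lambda>t. Re (f t)) \<longlongrightarrow> Re l) (at_right 0)" and I: "((\<lambda>t. Im (f t)) \<longlongrightarrow> Im l) (at_right 0)"
    using assms(1) by (auto intro: tendsto_Re tendsto_Im)
  have "0 \<le> Re l"
    by (rule tendsto_lowerbound[OF R]) (use ev in \<open>auto elim: eventually_mono\<close>)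
  moreover have "0 \<le> Im l"
    by (rule tendsto_lowerbound[OF I]) (use ev in \<open>auto elim: eventually_mono\<close>)
  moreover have "Im l \<le> 0"
    by (rule tendsto_upperbound[OF I]) (use ev in \<open>auto elim: eventually_mono\<close>)
  ultimately show ?thesis by (simp add: less_eq_complex_def)
qed

lemma gen_lim:
  assumes qds: "tp_qds T" and gen: "is_generator T D L" and rD: "\<rho> \<in> D" and x: "l2 x" and y: "l2 y"
  shows "((\<lambda>t. sandwich x (mat_scale (complex_of_real (1/t)) (mat_diff (T t \<rho>) \<rho>)) y) \<longlongrightarrow> sandwich x (L \<rho>) y) (at_right 0)"
proof -
  define Q where "Q t = mat_scale (complex_of_real (1/t)) (mat_diff (T t \<rho>) \<rho>)" for t
  have rtc: "\<rho> \<in> trace_class" using gen rD unfolding is_generator_def by auto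
  have Ltc: "L \<rho> \<in> trace_class"
    and lim: "((\<lambda>t. tnorm (mat_diff (Q t) (L \<rho>))) \<longlongrightarrow> 0) (at_right 0)"
    using gen rD unfolding is_generator_def Q_def by auto
  have Qtc: "Q t \<in> trace_class" if "t > 0" for t
  proof -
    have "T t \<rho> \<in> trace_class" using qds rtc that unfolding tp_qds_def bounded_linear_tc_def by auto
    then show ?thesis unfolding Q_def by (intro tc_scale tc_diff rtc)
  qed
  define K where "K = l2norm x * l2norm y"
  have "((\<lambda>t. sandwich x (Q t) y - sandwich x (L \<rho>) y) \<longlongrightarrow> 0) (at_right 0)"
  proof (rule Lim_null_comparison)
    show "eventually (\<lambda>t. norm (sandwich x (Q t) y - sandwich x (L \<rho>) y) \<le> K * tnorm (mat_diff (Q t) (L \<rho>))) (at_right 0)"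
      using eventually_at_right_less[of 0]
    proof eventually_elim
      case (elim t)
      have "sandwich x (Q t) y - sandwich x (L \<rho>) y = sandwich x (mat_diff (Q t) (L \<rho>)) y"
        by (rule sandwich_diff_tc[OF Qtc[OF elim] Ltc x y, symmetric])
      then show ?case using tc_sandwich(2)[OF tc_diff[OF Qtc[OF elim] Ltc] x y] unfolding K_def by simp
    qed
    show "((\<lambda>t. K * tnorm (mat_diff (Q t) (L \<rho>))) \<longlongrightarrow> 0) (at_right 0)"
      using tendsto_mult_left[OF lim, of K] by simp
  qed
  then show ?thesis unfolding Q_def by (rule LIM_zero_cancel)
qed



lemma dd_sum:
  assumes "finite A" "i \<in> A" "k \<in> A"
  shows "(\<Sum>a\<in>A. \<Sum>b\<in>A. if a = i \<and> b = k then f a b else 0) = (f i k :: complex)"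
proof -
  have "(\<Sum>a\<in>A. \<Sum>b\<in>A. if a = i \<and> b = k then f a b else 0) = (\<Sum>a\<in>A. if a = i then f a k else 0)"
    using assms by (intro sum.cong refl) (auto simp: sum.delta')
  also have "\<dots> = f i k" using assms by (simp add: sum.delta')
  finally show ?thesis .
qed

lemma w_expand:
  fixes \<phi> :: "'k vec" and \<sigma> :: "'k mat"
  assumes "finite A" "i \<in> A" "j \<in> A"
  defines "w \<equiv> (\<lambda>a. (if a = i then cnj (\<phi> j) else 0) - (if a = j then cnj (\<phi> i) else 0))"
  shows "(\<Sum>a\<in>A. \<Sum>b\<in>A. cnj (w a) * \<sigma> a b * w b) =
     \<phi> j * cnj (\<phi> j) * \<sigma> i i - \<phi> j * cnj (\<phi> i) * \<sigma> i j - \<phi> i * cnj (\<phi> j) * \<sigma> j i + \<phi> i * cnj (\<phi> i) * \<sigma> j j"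
proof -
  have pt: "cnj (w a) * \<sigma> a b * w b =
     (if a = i \<and> b = i then \<phi> j * cnj (\<phi> j) * \<sigma> a b else 0)
   - (if a = i \<and> b = j then \<phi> j * cnj (\<phi> i) * \<sigma> a b else 0)
   - (if a = j \<and> b = i then \<phi> i * cnj (\<phi> j) * \<sigma> a b else 0)
   + (if a = j \<and> b = j then \<phi> i * cnj (\<phi> i) * \<sigma> a b else 0)" for a b
    unfolding w_def by (auto simp: algebra_simps)
  show ?thesis
    unfolding pt using assms(1-3)
    by (simp add: sum.distrib sum_subtractf dd_sum)
qed

lemma span_basis_supp: "finite (supp u) \<Longrightarrow> u \<in> span_basis"
  unfolding span_basis_def supp_def by simp

lemma diag_bound:
  fixes \<phi> :: "'k vec" and \<sigma> :: "'k mat"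
  assumes pos: "\<And>z. l2 z \<Longrightarrow> sandwich z \<sigma> z \<ge> 0"
    and phi: "\<phi> \<in> span_basis" and tr: "trace \<sigma> = inner_l2 \<phi> \<phi>"
  shows "sandwich \<phi> \<sigma> \<phi> \<le> inner_l2 \<phi> \<phi> * inner_l2 \<phi> \<phi>"
proof -
  define A where "A = supp \<phi>"
  have fA: "finite A" unfolding A_def using phi by (rule span_basis_finite)
  define n where "n = inner_l2 \<phi> \<phi>"
  define sw where "sw = sandwich \<phi> \<sigma> \<phi>"
  define trA where "trA = (\<Sum>i\<in>A. \<sigma> i i)"
  have sw_eq: "sw = (\<Sum>i\<in>A. \<Sum>j\<in>A. cnj (\<phi> i) * \<sigma> i j * \<phi> j)"
    unfolding sw_def A_def by (rule sandwich_fin) (use fA in \<open>auto simp: A_def\<close>)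
  have n_eq: "n = (\<Sum>i\<in>A. cnj (\<phi> i) * \<phi> i)"
    unfolding n_def by (rule inner_fin) (use fA in \<open>auto simp: A_def\<close>)
  have n_nonneg: "n \<ge> 0" unfolding n_eq by (intro sum_nonneg) (simp add: cnj_mult_self_nonneg)
  define w where "w i j = (\<lambda>a. (if a = i then cnj (\<phi> j) else 0) - (if a = j then cnj (\<phi> i) else 0))" for i j
  have wpos: "0 \<le> (\<Sum>a\<in>A. \<Sum>b\<in>A. cnj (w i j a) * \<sigma> a b * w i j b)" if "i \<in> A" "j \<in> A" for i j
  proof -
    have sw: "supp (w i j) \<subseteq> A" using that unfolding w_def supp_def by auto
    have "l2 (w i j)" by (rule span_basis_l2, rule span_basis_supp) (use sw fA in \<open>auto intro: finite_subset\<close>)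
    then have "0 \<le> sandwich (w i j) \<sigma> (w i j)" by (rule pos)
    also have "sandwich (w i j) \<sigma> (w i j) = (\<Sum>a\<in>A. \<Sum>b\<in>A. cnj (w i j a) * \<sigma> a b * w i j b)"
      by (rule sandwich_fin[OF fA sw sw])
    finally show ?thesis .
  qed
  have "0 \<le> (\<Sum>i\<in>A. \<Sum>j\<in>A. \<Sum>a\<in>A. \<Sum>b\<in>A. cnj (w i j a) * \<sigma> a b * w i j b)"
    by (rule sum_nonneg, rule sum_nonneg, rule wpos)
  also have "\<dots> = (\<Sum>i\<in>A. \<Sum>j\<in>A. \<phi> j * cnj (\<phi> j) * \<sigma> i i - \<phi> j * cnj (\<phi> i) * \<sigma> i j
        - \<phi> i * cnj (\<phi> j) * \<sigma> j i + \<phi> i * cnj (\<phi> i) * \<sigma> j j)"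
    unfolding w_def using fA by (intro sum.cong refl w_expand) auto
  also have "\<dots> = 2 * (n * trA) - 2 * sw"
  proof -
    have e1: "(\<Sum>i\<in>A. \<Sum>j\<in>A. \<phi> j * cnj (\<phi> j) * \<sigma> i i) = n * trA"
      unfolding n_eq trA_def by (simp add: sum_product algebra_simps)
    have e2: "(\<Sum>i\<in>A. \<Sum>j\<in>A. \<phi> i * cnj (\<phi> i) * \<sigma> j j) = n * trA"
      unfolding e1[symmetric] by (subst sum.swap) simp
    have e3: "(\<Sum>i\<in>A. \<Sum>j\<in>A. \<phi> j * cnj (\<phi> i) * \<sigma> i j) = sw"
      unfolding sw_eq by (simp add: algebra_simps)
    have e4: "(\<Sum>i\<in>A. \<Sum>j\<in>A. \<phi> i * cnj (\<phi> j) * \<sigma> j i) = sw"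
      unfolding sw_eq by (subst sum.swap) (simp add: algebra_simps)
    show ?thesis
      by (simp add: sum.distrib sum_subtractf e1 e2 e3 e4)
  qed
  finally have "0 \<le> 2 * (n * trA) - 2 * sw" .
  then have swle: "sw \<le> n * trA" by (simp add: less_eq_complex_def)
  have diag: "\<sigma> k k \<ge> 0" for k
  proof -
    have s: "supp (basis_vec k) \<subseteq> {k}" unfolding supp_def basis_vec_def by auto
    have "l2 (basis_vec k)" by (rule span_basis_l2, rule span_basis_supp) (use s in \<open>auto intro: finite_subset\<close>)
    then have "0 \<le> sandwich (basis_vec k) \<sigma> (basis_vec k)" by (rule pos)
    also have "sandwich (basis_vec k) \<sigma> (basis_vec k) = \<sigma> k k"
      using sandwich_fin[OF _ s s, of \<sigma>] by (simp add: basis_vec_def)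
    finally show ?thesis .
  qed
  show ?thesis
  proof (cases "n = 0")
    case True
    then show ?thesis using swle unfolding sw_def n_def by simp
  next
    case False
    then have "trace \<sigma> \<noteq> 0" using tr unfolding n_def by simp
    then have sm: "(\<lambda>k. \<sigma> k k) summable_on UNIV" unfolding trace_def using infsum_not_exists by blast
    have "trA = infsum (\<lambda>k. \<sigma> k k) A" unfolding trA_def using fA by simp
    also have "\<dots> \<le> infsum (\<lambda>k. \<sigma> k k) UNIV"
      by (rule infsum_mono_neutral_complex) (use fA sm diag in auto)
    also have "\<dots> = n" using tr unfolding trace_def n_def by simp
    finally have "n * trA \<le> n * n" by (rule mult_left_mono[OF _ n_nonneg])
    then show ?thesis using swle unfolding sw_def n_def by simp
  qed
qed



lemma part3:
  fixes T :: "real \<Rightarrow> ('k::countable) mat \<Rightarrow> 'k mat"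
    and D :: "'k mat set" and L :: "'k mat \<Rightarrow> 'k mat"
    and N :: nat and \<phi> \<psi> :: "nat \<Rightarrow> 'k vec"
  assumes qds: "tp_qds T" and gen: "is_generator T D L" and SD: "span_matrix_units \<subseteq> D"
    and H: "\<forall>k<N. \<phi> k \<in> span_basis \<and> l2 (\<psi> k)" "(\<Sum>k<N. inner_l2 (\<phi> k) (\<psi> k)) = 0"
  shows "(\<Sum>k<N. \<Sum>l<N. sandwich (\<psi> k) (L (ket_bra (\<phi> k) (\<phi> l))) (\<psi> l)) \<ge> 0"
proof -
  define \<rho> where "\<rho> k l = ket_bra (\<phi> k) (\<phi> l)" for k l
  define F where "F t = (\<Sum>k<N. \<Sum>l<N. sandwich (\<psi> k) (mat_scale (complex_of_real (1/t)) (mat_diff (T t (\<rho> k l)) (\<rho> k l))) (\<psi> l))" for t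
  have rD: "\<rho> k l \<in> D" if "k < N" "l < N" for k l
    using SD ketbra_units H(1) that unfolding \<rho>_def by blast
  have rtc: "\<rho> k l \<in> trace_class" if "k < N" "l < N" for k l
    using ketbra_tc H(1) that unfolding \<rho>_def by blast
  have lim: "(F \<longlongrightarrow> (\<Sum>k<N. \<Sum>l<N. sandwich (\<psi> k) (L (\<rho> k l)) (\<psi> l))) (at_right 0)"
    unfolding F_def by (intro tendsto_sum gen_lim[OF qds gen]) (use rD H(1) in auto)
  have ev: "eventually (\<lambda>t. F t \<ge> 0) (at_right 0)"
    using eventually_at_right_less[of "0::real"]
  proof eventually_elim
    case (elim t)
    have Ttc: "T t (\<rho> k l) \<in> trace_class" if "k < N" "l < N" for k l
      using qds rtc[OF that] elim unfolding tp_qds_def bounded_linear_tc_def by auto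
    define P where "P = (\<Sum>k<N. \<Sum>l<N. sandwich (\<psi> k) (T t (\<rho> k l)) (\<psi> l))"
    define Z where "Z = (\<Sum>k<N. \<Sum>l<N. sandwich (\<psi> k) (\<rho> k l) (\<psi> l))"
    have "F t = (\<Sum>k<N. \<Sum>l<N. complex_of_real (1/t) * (sandwich (\<psi> k) (T t (\<rho> k l)) (\<psi> l) - sandwich (\<psi> k) (\<rho> k l) (\<psi> l)))"
      unfolding F_def sandwich_scale
      by (intro sum.cong refl) (simp add: sandwich_diff_tc Ttc rtc H(1))
    also have "\<dots> = complex_of_real (1/t) * (P - Z)"
      unfolding P_def Z_def by (simp only: sum_subtractf flip: sum_distrib_left)
    finally have Ft: "F t = complex_of_real (1/t) * (P - Z)" .
    have "Z = (\<Sum>k<N. \<Sum>l<N. cnj (inner_l2 (\<phi> k) (\<psi> k)) * inner_l2 (\<phi> l) (\<psi> l))"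
      unfolding Z_def \<rho>_def using H(1) by (intro sum.cong refl) (simp add: sandwich_ketbra)
    also have "\<dots> = cnj (\<Sum>k<N. inner_l2 (\<phi> k) (\<psi> k)) * (\<Sum>l<N. inner_l2 (\<phi> l) (\<psi> l))"
      by (simp add: sum_product)
    also have "\<dots> = 0" using H(2) by simp
    finally have Z0: "Z = 0" .
    have cp: "completely_positive (T t)" using qds elim unfolding tp_qds_def by auto
    have bp: "block_positive N \<rho>" unfolding \<rho>_def by (rule ketbra_block_positive) (use H(1) in auto)
    have "block_positive N (\<lambda>a b. T t (\<rho> a b))"
      using cp bp rtc unfolding completely_positive_def by blast
    then have P0: "P \<ge> 0" unfolding block_positive_def P_def using H(1) by auto
    have "complex_of_real (1/t) \<ge> 0" using elim by (simp add: less_eq_complex_def)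
    then show "F t \<ge> 0" unfolding Ft Z0 using P0 by (metis diff_zero mult_nonneg_nonneg)
  qed
  show ?thesis using lim_nonneg_complex[OF lim ev] unfolding \<rho>_def .
qed

lemma part1:
  fixes T :: "real \<Rightarrow> ('k::countable) mat \<Rightarrow> 'k mat"
    and D :: "'k mat set" and L :: "'k mat \<Rightarrow> 'k mat" and \<phi> :: "'k vec"
  assumes qds: "tp_qds T" and gen: "is_generator T D L" and SD: "span_matrix_units \<subseteq> D"
    and phi: "\<phi> \<in> span_basis"
  shows "sandwich \<phi> (L (ket_bra \<phi> \<phi>)) \<phi> \<le> 0"
proof -
  define P where "P = ket_bra \<phi> \<phi>"
  define n where "n = inner_l2 \<phi> \<phi>"
  define F where "F t = sandwich \<phi> (mat_scale (complex_of_real (1/t)) (mat_diff (T t P) P)) \<phi>" for t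
  have PD: "P \<in> D" using SD ketbra_units[OF phi phi] unfolding P_def by blast
  have Ptc: "P \<in> trace_class" using ketbra_tc[OF phi phi] unfolding P_def .
  have l2p: "l2 \<phi>" by (rule span_basis_l2[OF phi])
  have fA: "finite (supp \<phi>)" by (rule span_basis_finite[OF phi])
  have n_eq: "n = (\<Sum>i\<in>supp \<phi>. cnj (\<phi> i) * \<phi> i)"
    unfolding n_def by (rule inner_fin[OF fA order_refl])
  have n_nonneg: "n \<ge> 0" unfolding n_eq by (intro sum_nonneg) (simp add: cnj_mult_self_nonneg)
  have cn: "cnj n = n" using n_nonneg by (metis Reals_cnj_iff nonnegative_complex_is_real)
  have trP: "trace P = n"
  proof -
    have "trace P = (\<Sum>k\<in>supp \<phi>. P k k)"
      unfolding trace_def by (rule infsum_supp[OF fA]) (auto simp: P_def ket_bra_def supp_def)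
    then show ?thesis unfolding n_eq P_def ket_bra_def by (simp add: mult.commute)
  qed
  have sP: "sandwich \<phi> P \<phi> = n * n"
    unfolding P_def sandwich_ketbra[OF phi phi] n_def[symmetric] cn ..
  have lim: "(F \<longlongrightarrow> sandwich \<phi> (L P) \<phi>) (at_right 0)"
    unfolding F_def by (rule gen_lim[OF qds gen PD l2p l2p])
  have ev: "eventually (\<lambda>t. - F t \<ge> 0) (at_right 0)"
    using eventually_at_right_less[of "0::real"]
  proof eventually_elim
    case (elim t)
    have Ttc: "T t P \<in> trace_class"
      using qds Ptc elim unfolding tp_qds_def bounded_linear_tc_def by auto
    have Ft: "F t = complex_of_real (1/t) * (sandwich \<phi> (T t P) \<phi> - n * n)"
      unfolding F_def sandwich_scale sandwich_diff_tc[OF Ttc Ptc l2p l2p] sP ..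
    have cp: "completely_positive (T t)" using qds elim unfolding tp_qds_def by auto
    have bp: "block_positive 1 (\<lambda>a b. P)"
      using ketbra_block_positive[of 1 "\<lambda>_. \<phi>"] phi unfolding P_def by simp
    have "block_positive 1 (\<lambda>a b. T t P)"
      by (rule cp[unfolded completely_positive_def, rule_format, of 1 "\<lambda>a b. P"]) (use bp Ptc in blast)
    then have pos: "sandwich z (T t P) z \<ge> 0" if "l2 z" for z
    proof -
      have h: "(\<forall>a::nat<1. l2 ((\<lambda>_. z) a)) \<longrightarrow> 0 \<le> (\<Sum>a::nat<1. \<Sum>b::nat<1. sandwich ((\<lambda>_. z) a) (T t P) ((\<lambda>_. z) b))"
        using \<open>block_positive 1 (\<lambda>a b. T t P)\<close>[unfolded block_positive_def, THEN spec[of _ "\<lambda>_. z"]] .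
      then show ?thesis using that by simp
    qed
    have tr: "trace (T t P) = inner_l2 \<phi> \<phi>"
      using qds Ptc elim trP unfolding tp_qds_def trace_preserving_def n_def by auto
    have "sandwich \<phi> (T t P) \<phi> \<le> n * n"
      unfolding n_def by (rule diag_bound[OF pos phi tr])
    then have "0 \<le> n * n - sandwich \<phi> (T t P) \<phi>" by (simp only: diff_ge_0_iff_ge)
    moreover have "complex_of_real (1/t) \<ge> 0" using elim by (simp add: less_eq_complex_def)
    ultimately have "0 \<le> complex_of_real (1/t) * (n * n - sandwich \<phi> (T t P) \<phi>)"
      by (rule mult_nonneg_nonneg[rotated])
    then show "- F t \<ge> 0" unfolding Ft by (simp add: algebra_simps)
  qed
  have "- sandwich \<phi> (L P) \<phi> \<ge> 0"
    by (rule lim_nonneg_complex[OF tendsto_minus[OF lim] ev])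
  then show ?thesis unfolding P_def by simp
qed


theorem lemma3p1:
  fixes T :: "real \<Rightarrow> ('k::countable) mat \<Rightarrow> 'k mat"
    and D :: "'k mat set" and L :: "'k mat \<Rightarrow> 'k mat"
  assumes "tp_qds T"
    and "is_generator T D L"
    and "matrix_normal T D L"
  shows "(\<forall>\<phi>\<in>span_basis. sandwich \<phi> (L (ket_bra \<phi> \<phi>)) \<phi> \<le> 0)
       \<and> (\<forall>\<phi>\<in>span_basis. \<forall>\<psi>. l2 \<psi> \<and> inner_l2 \<phi> \<psi> = 0
            \<longrightarrow> sandwich \<psi> (L (ket_bra \<phi> \<phi>)) \<psi> \<ge> 0)
       \<and> (\<forall>(N::nat) (\<phi>::nat \<Rightarrow> 'k vec) (\<psi>::nat \<Rightarrow> 'k vec).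
            (\<forall>k<N. \<phi> k \<in> span_basis \<and> l2 (\<psi> k))
            \<and> (\<Sum>k<N. inner_l2 (\<phi> k) (\<psi> k)) = 0
            \<longrightarrow> (\<Sum>k<N. \<Sum>l<N. sandwich (\<psi> k) (L (ket_bra (\<phi> k) (\<phi> l))) (\<psi> l)) \<ge> 0)"
proof -
  have SD: "span_matrix_units \<subseteq> D" using assms(3) unfolding matrix_normal_def is_core_def by blast
  have p1: "\<forall>\<phi>\<in>span_basis. sandwich \<phi> (L (ket_bra \<phi> \<phi>)) \<phi> \<le> 0"
    using part1[OF assms(1,2) SD] by blast
  have p3: "\<forall>(N::nat) (\<phi>::nat \<Rightarrow> 'k vec) (\<psi>::nat \<Rightarrow> 'k vec).
            (\<forall>k<N. \<phi> k \<in> span_basis \<and> l2 (\<psi> k))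
            \<and> (\<Sum>k<N. inner_l2 (\<phi> k) (\<psi> k)) = 0
            \<longrightarrow> (\<Sum>k<N. \<Sum>l<N. sandwich (\<psi> k) (L (ket_bra (\<phi> k) (\<phi> l))) (\<psi> l)) \<ge> 0"
  proof (intro allI impI)
    fix N :: nat and \<phi> \<psi> :: "nat \<Rightarrow> 'k vec"
    assume H: "(\<forall>k<N. \<phi> k \<in> span_basis \<and> l2 (\<psi> k)) \<and> (\<Sum>k<N. inner_l2 (\<phi> k) (\<psi> k)) = 0"
    show "(\<Sum>k<N. \<Sum>l<N. sandwich (\<psi> k) (L (ket_bra (\<phi> k) (\<phi> l))) (\<psi> l)) \<ge> 0"
      by (rule part3[OF assms(1,2) SD]) (use H in auto)
  qed
  have p2: "\<forall>\<phi>\<in>span_basis. \<forall>\<psi>. l2 \<psi> \<and> inner_l2 \<phi> \<psi> = 0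
            \<longrightarrow> sandwich \<psi> (L (ket_bra \<phi> \<phi>)) \<psi> \<ge> 0"
  proof (intro ballI allI impI)
    fix \<phi> \<psi> :: "'k vec" assume "\<phi> \<in> span_basis" "l2 \<psi> \<and> inner_l2 \<phi> \<psi> = 0"
    then show "sandwich \<psi> (L (ket_bra \<phi> \<phi>)) \<psi> \<ge> 0"
      using part3[OF assms(1,2) SD, where N=1 and \<phi>="\<lambda>_. \<phi>" and \<psi>="\<lambda>_. \<psi>"] by simp
  qed
  show ?thesis using p1 p2 p3 by blast
qed

end
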